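(* Let $M$ be a $\pi$-projective right $R$-module. Then $M$ is principally Goldie*-lifting if and only if every cyclic submodule $X$ of $M$ can be written as $X=D\oplus A$ where $D$ is a direct summand of $M$ and $A\ll M$.
   Context: $R$ is an associative ring with identity; modules are unital right $R$-modules. $M$ is $\pi$-projective if for all submodules $U,V$ with $U+V=M$ there exists $f\in\mathrm{End}(M)$ with $f(M)\subseteq U$ and $(1-f)(M)\subseteq V$. $K\ll M$ means $K$ is small in $M$. For submodules $X,Y$ of $M$, $X\,\beta^*\,Y$ means $(X+Y)/X\ll M/X$ and $(X+Y)/Y\ll M/Y$. $M$ is principally Goldie*-lifting if for every cyclic submodule $X$ there is a direct summand $D$ of $M$ with $X\,\beta^*\,D$. *)

theory Defs
  imports "HOL-Algebra.Ring" "HOL-Algebra.AbelCoset"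
begin

text \<open>A right R-module: an additive abelian group together with a right scalar
multiplication x \<cdot> r.  The ring fields mult/one of the module record are unused.\<close>

record ('a, 'b) rmodule = "'b ring" +
  rsmult :: "'b \<Rightarrow> 'a \<Rightarrow> 'b"

locale right_module = R?: ring R + M?: abelian_group M
  for R :: "('a, 'c) ring_scheme" and M :: "('a, 'b, 'd) rmodule_scheme" +
  assumes rsmult_closed: "\<lbrakk>x \<in> carrier M; r \<in> carrier R\<rbrakk> \<Longrightarrow> rsmult M x r \<in> carrier M"
    and rsmult_add_l: "\<lbrakk>x \<in> carrier M; y \<in> carrier M; r \<in> carrier R\<rbrakk> \<Longrightarrow>
         rsmult M (x \<oplus>\<^bsub>M\<^esub> y) r = rsmult M x r \<oplus>\<^bsub>M\<^esub> rsmult M y r"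
    and rsmult_add_r: "\<lbrakk>x \<in> carrier M; r \<in> carrier R; s \<in> carrier R\<rbrakk> \<Longrightarrow>
         rsmult M x (r \<oplus>\<^bsub>R\<^esub> s) = rsmult M x r \<oplus>\<^bsub>M\<^esub> rsmult M x s"
    and rsmult_assoc: "\<lbrakk>x \<in> carrier M; r \<in> carrier R; s \<in> carrier R\<rbrakk> \<Longrightarrow>
         rsmult M x (r \<otimes>\<^bsub>R\<^esub> s) = rsmult M (rsmult M x r) s"
    and rsmult_one: "x \<in> carrier M \<Longrightarrow> rsmult M x \<one>\<^bsub>R\<^esub> = x"

definition submod :: "('a, 'c) ring_scheme \<Rightarrow> ('a, 'b, 'd) rmodule_scheme \<Rightarrow> 'b set \<Rightarrow> bool" where
  "submod R M N \<longleftrightarrow> N \<subseteq> carrier M \<and> \<zero>\<^bsub>M\<^esub> \<in> N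
     \<and> (\<forall>x\<in>N. \<forall>y\<in>N. x \<oplus>\<^bsub>M\<^esub> y \<in> N) \<and> (\<forall>x\<in>N. \<ominus>\<^bsub>M\<^esub> x \<in> N)
     \<and> (\<forall>x\<in>N. \<forall>r\<in>carrier R. rsmult M x r \<in> N)"

definition small :: "('a, 'c) ring_scheme \<Rightarrow> ('a, 'b, 'd) rmodule_scheme \<Rightarrow> 'b set \<Rightarrow> bool" where
  "small R M K \<longleftrightarrow> submod R M K \<and>
     (\<forall>L. submod R M L \<and> K <+>\<^bsub>M\<^esub> L = carrier M \<longrightarrow> L = carrier M)"

definition quot :: "('a, 'b, 'd) rmodule_scheme \<Rightarrow> 'b set \<Rightarrow> ('a, 'b set) rmodule" where
  "quot M X = \<lparr>carrier = a_rcosets\<^bsub>M\<^esub> X, mult = (\<lambda>A B. undefined), one = undefined,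
     zero = X, add = set_add M,
     rsmult = (\<lambda>C r. (\<Union>c\<in>C. {rsmult M c r}) <+>\<^bsub>M\<^esub> X)\<rparr>"

definition quot_sub :: "('a, 'b, 'd) rmodule_scheme \<Rightarrow> 'b set \<Rightarrow> 'b set \<Rightarrow> 'b set set" where
  "quot_sub M N X = (\<lambda>y. X +>\<^bsub>M\<^esub> y) ` N"

definition beta_star :: "('a, 'c) ring_scheme \<Rightarrow> ('a, 'b, 'd) rmodule_scheme \<Rightarrow> 'b set \<Rightarrow> 'b set \<Rightarrow> bool" where
  "beta_star R M X Y \<longleftrightarrow>
     small R (quot M X) (quot_sub M (X <+>\<^bsub>M\<^esub> Y) X) \<and>
     small R (quot M Y) (quot_sub M (X <+>\<^bsub>M\<^esub> Y) Y)"

text \<open>Endomorphisms of M (values outside the carrier are irrelevant).\<close>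
definition endo :: "('a, 'c) ring_scheme \<Rightarrow> ('a, 'b, 'd) rmodule_scheme \<Rightarrow> ('b \<Rightarrow> 'b) \<Rightarrow> bool" where
  "endo R M f \<longleftrightarrow> f \<in> carrier M \<rightarrow> carrier M
     \<and> (\<forall>x\<in>carrier M. \<forall>y\<in>carrier M. f (x \<oplus>\<^bsub>M\<^esub> y) = f x \<oplus>\<^bsub>M\<^esub> f y)
     \<and> (\<forall>x\<in>carrier M. \<forall>r\<in>carrier R. f (rsmult M x r) = rsmult M (f x) r)"

definition pi_projective :: "('a, 'c) ring_scheme \<Rightarrow> ('a, 'b, 'd) rmodule_scheme \<Rightarrow> bool" where
  "pi_projective R M \<longleftrightarrow> (\<forall>U V. submod R M U \<and> submod R M V \<and> U <+>\<^bsub>M\<^esub> V = carrier M \<longrightarrow>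
     (\<exists>f. endo R M f \<and> f ` carrier M \<subseteq> U \<and> (\<lambda>x. x \<ominus>\<^bsub>M\<^esub> f x) ` carrier M \<subseteq> V))"

definition direct_summand :: "('a, 'c) ring_scheme \<Rightarrow> ('a, 'b, 'd) rmodule_scheme \<Rightarrow> 'b set \<Rightarrow> bool" where
  "direct_summand R M D \<longleftrightarrow> submod R M D \<and>
     (\<exists>E. submod R M E \<and> D <+>\<^bsub>M\<^esub> E = carrier M \<and> D \<inter> E = {\<zero>\<^bsub>M\<^esub>})"

definition cyclic_submod :: "('a, 'c) ring_scheme \<Rightarrow> ('a, 'b, 'd) rmodule_scheme \<Rightarrow> 'b set \<Rightarrow> bool" where
  "cyclic_submod R M X \<longleftrightarrow> (\<exists>x\<in>carrier M. X = (\<lambda>r. rsmult M x r) ` carrier R)"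

definition principally_Goldie_star_lifting :: "('a, 'c) ring_scheme \<Rightarrow> ('a, 'b, 'd) rmodule_scheme \<Rightarrow> bool" where
  "principally_Goldie_star_lifting R M \<longleftrightarrow>
     (\<forall>X. cyclic_submod R M X \<longrightarrow> (\<exists>D. direct_summand R M D \<and> beta_star R M X D))"

end

theory Submission
  imports Defs
begin


context right_module begin

lemma submod_abelian: "submod R M N \<Longrightarrow> abelian_subgroup N M"
  apply (rule abelian_subgroupI3[OF additive_subgroupI])
   apply (rule M.add.subgroupI)
  apply (auto simp: submod_def M.abelian_group_axioms)
  done

lemma smult_zero_r: "x \<in> carrier M \<Longrightarrow> rsmult M x \<zero>\<^bsub>R\<^esub> = \<zero>\<^bsub>M\<^esub>"
proof -
  assume x: "x \<in> carrier M"
  have "rsmult M x \<zero>\<^bsub>R\<^esub> = rsmult M x (\<zero>\<^bsub>R\<^esub> \<oplus>\<^bsub>R\<^esub> \<zero>\<^bsub>R\<^esub>)" by simp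
  also have "\<dots> = rsmult M x \<zero>\<^bsub>R\<^esub> \<oplus>\<^bsub>M\<^esub> rsmult M x \<zero>\<^bsub>R\<^esub>" using x rsmult_add_r[of x "\<zero>\<^bsub>R\<^esub>" "\<zero>\<^bsub>R\<^esub>"] by simp
  finally show ?thesis using x rsmult_closed by (metis M.l_zero M.add.right_cancel R.zero_closed M.zero_closed)
qed

lemma smult_zero_l: "r \<in> carrier R \<Longrightarrow> rsmult M \<zero>\<^bsub>M\<^esub> r = \<zero>\<^bsub>M\<^esub>"
proof -
  assume r: "r \<in> carrier R"
  have "rsmult M \<zero>\<^bsub>M\<^esub> r = rsmult M (\<zero>\<^bsub>M\<^esub> \<oplus>\<^bsub>M\<^esub> \<zero>\<^bsub>M\<^esub>) r" by simp
  also have "\<dots> = rsmult M \<zero>\<^bsub>M\<^esub> r \<oplus>\<^bsub>M\<^esub> rsmult M \<zero>\<^bsub>M\<^esub> r" using r rsmult_add_l[of "\<zero>\<^bsub>M\<^esub>" "\<zero>\<^bsub>M\<^esub>" r] by simp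
  finally show ?thesis using r rsmult_closed by (metis M.l_zero M.add.right_cancel M.zero_closed)
qed

lemma smult_neg_r: "x \<in> carrier M \<Longrightarrow> r \<in> carrier R \<Longrightarrow> rsmult M x (\<ominus>\<^bsub>R\<^esub> r) = \<ominus>\<^bsub>M\<^esub> rsmult M x r"
proof -
  assume x: "x \<in> carrier M" and r: "r \<in> carrier R"
  have "rsmult M x (\<ominus>\<^bsub>R\<^esub> r) \<oplus>\<^bsub>M\<^esub> rsmult M x r = rsmult M x (\<ominus>\<^bsub>R\<^esub> r \<oplus>\<^bsub>R\<^esub> r)"
    using x r by (simp add: rsmult_add_r)
  also have "\<dots> = \<zero>\<^bsub>M\<^esub>" using x r by (simp add: smult_zero_r R.l_neg)
  finally show ?thesis using x r rsmult_closed
    by (metis M.add.inv_equality R.a_inv_closed)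
qed

lemma cyclic_submod: "cyclic_submod R M X \<Longrightarrow> submod R M X"
  unfolding cyclic_submod_def submod_def
  apply (elim bexE)
  apply (auto simp: rsmult_closed)
     apply (metis R.zero_closed smult_zero_r image_eqI)
    apply (metis R.add.m_closed rsmult_add_r image_eqI)
   apply (metis R.a_inv_closed smult_neg_r image_eqI)
  apply (metis R.m_closed rsmult_assoc image_eqI)
  done

end



lemma quot_simps[simp]:
  "carrier (quot M Y) = a_rcosets\<^bsub>M\<^esub> Y"
  "zero (quot M Y) = Y"
  "add (quot M Y) = set_add M"
  "rsmult (quot M Y) C r = (\<Union>c\<in>C. {rsmult M c r}) <+>\<^bsub>M\<^esub> Y"
  by (simp_all add: quot_def)

context right_module begin

lemma quot_neg:
  assumes "abelian_subgroup Y M" "C \<in> a_rcosets\<^bsub>M\<^esub> Y"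
  shows "\<ominus>\<^bsub>quot M Y\<^esub> C = a_set_inv\<^bsub>M\<^esub> C"
proof -
  interpret Y: abelian_subgroup Y M by fact
  have G: "group (M A_Mod Y)" by (rule Y.a_factorgroup_is_group)
  have carr: "carrier (M A_Mod Y) = a_rcosets\<^bsub>M\<^esub> Y"
    by (simp add: A_FactGroup_def FactGroup_def A_RCOSETS_def)
  have one: "one (M A_Mod Y) = Y"
    by (simp add: A_FactGroup_def FactGroup_def)
  have C: "C \<in> carrier (M A_Mod Y)" using assms carr by simp
  have inv: "inv\<^bsub>M A_Mod Y\<^esub> C = a_set_inv\<^bsub>M\<^esub> C" by (rule Y.a_inv_FactGroup[OF C])
  have iin: "a_set_inv\<^bsub>M\<^esub> C \<in> a_rcosets\<^bsub>M\<^esub> Y"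
    using group.inv_closed[OF G C] inv carr by simp
  have l: "a_set_inv\<^bsub>M\<^esub> C <+>\<^bsub>M\<^esub> C = Y"
    using group.l_inv[OF G C] inv one by simp
  have r: "C <+>\<^bsub>M\<^esub> a_set_inv\<^bsub>M\<^esub> C = Y"
    using group.r_inv[OF G C] inv one by simp
  have uniq: "y = a_set_inv\<^bsub>M\<^esub> C" if "y \<in> a_rcosets\<^bsub>M\<^esub> Y" "y <+>\<^bsub>M\<^esub> C = Y" for y
  proof -
    have "inv\<^bsub>M A_Mod Y\<^esub> C = y"
      by (rule group.inv_equality[OF G]) (use that C carr one in simp_all)
    then show ?thesis using inv by simp
  qed
  have e: "\<ominus>\<^bsub>quot M Y\<^esub> C = (THE y. y \<in> a_rcosets\<^bsub>M\<^esub> Y \<and> C <+>\<^bsub>M\<^esub> y = Y \<and> y <+>\<^bsub>M\<^esub> C = Y)"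
    unfolding a_inv_def m_inv_def by simp
  show ?thesis unfolding e
    by (rule the_equality) (use iin l r uniq in blast)+
qed

lemma rcos_smult:
  assumes "submod R M Y" "x \<in> carrier M" "r \<in> carrier R"
  shows "(\<Union>c\<in>Y +>\<^bsub>M\<^esub> x. {rsmult M c r}) <+>\<^bsub>M\<^esub> Y = Y +>\<^bsub>M\<^esub> rsmult M x r"
proof -
  interpret Y: abelian_subgroup Y M using submod_abelian assms(1) by blast
  have Ys: "Y \<subseteq> carrier M" using assms(1) by (simp add: submod_def)
  have Ysm: "rsmult M h r \<in> Y" if "h \<in> Y" for h using assms(1) that assms(3) by (simp add: submod_def)
  show ?thesis
  proof
    show "(\<Union>c\<in>Y +>\<^bsub>M\<^esub> x. {rsmult M c r}) <+>\<^bsub>M\<^esub> Y \<subseteq> Y +>\<^bsub>M\<^esub> rsmult M x r"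
    proof
    fix z assume "z \<in> (\<Union>c\<in>Y +>\<^bsub>M\<^esub> x. {rsmult M c r}) <+>\<^bsub>M\<^esub> Y"
    then obtain h h' where h: "h \<in> Y" "h' \<in> Y" and z: "z = rsmult M (h \<oplus>\<^bsub>M\<^esub> x) r \<oplus>\<^bsub>M\<^esub> h'"
      by (auto simp: set_add_def' a_r_coset_def')
    have hc: "h \<in> carrier M" "h' \<in> carrier M" using h Ys by auto
    have "z = (rsmult M h r \<oplus>\<^bsub>M\<^esub> h') \<oplus>\<^bsub>M\<^esub> rsmult M x r"
    proof -
      have e: "rsmult M (h \<oplus>\<^bsub>M\<^esub> x) r = rsmult M h r \<oplus>\<^bsub>M\<^esub> rsmult M x r"
        using hc assms by (simp add: rsmult_add_l)
      have c: "rsmult M h r \<in> carrier M" "rsmult M x r \<in> carrier M"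
        using hc assms by (simp_all add: rsmult_closed)
      show ?thesis unfolding z e using c hc by (simp add: M.a_ac)
    qed
    moreover have "rsmult M h r \<oplus>\<^bsub>M\<^esub> h' \<in> Y" using Ysm h by simp
    ultimately show "z \<in> Y +>\<^bsub>M\<^esub> rsmult M x r" by (auto simp: a_r_coset_def')
    qed
  next
    show "Y +>\<^bsub>M\<^esub> rsmult M x r \<subseteq> (\<Union>c\<in>Y +>\<^bsub>M\<^esub> x. {rsmult M c r}) <+>\<^bsub>M\<^esub> Y"
    proof
    fix z assume "z \<in> Y +>\<^bsub>M\<^esub> rsmult M x r"
    then obtain h where h: "h \<in> Y" and z: "z = h \<oplus>\<^bsub>M\<^esub> rsmult M x r"
      by (auto simp: a_r_coset_def')
    have hc: "h \<in> carrier M" using h Ys by auto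
    have x: "x \<in> Y +>\<^bsub>M\<^esub> x" using Y.a_rcos_self assms(2) by simp
    have "z = rsmult M x r \<oplus>\<^bsub>M\<^esub> h" unfolding z using hc assms rsmult_closed M.a_comm by blast
    then show "z \<in> (\<Union>c\<in>Y +>\<^bsub>M\<^esub> x. {rsmult M c r}) <+>\<^bsub>M\<^esub> Y"
      using x h by (auto simp: set_add_def')
    qed
  qed
qed

lemma quot_sub_submod:
  assumes N: "submod R M N" and Y: "submod R M Y" and YN: "Y \<subseteq> N"
  shows "submod R (quot M Y) (quot_sub M N Y)"
proof -
  interpret Y: abelian_subgroup Y M using submod_abelian Y by blast
  have Ns: "N \<subseteq> carrier M" using N by (simp add: submod_def)
  have Nz: "\<zero>\<^bsub>M\<^esub> \<in> N" using N by (simp add: submod_def)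
  have Na: "x \<oplus>\<^bsub>M\<^esub> y \<in> N" if "x \<in> N" "y \<in> N" for x y using N that by (simp add: submod_def)
  have Nn: "\<ominus>\<^bsub>M\<^esub> x \<in> N" if "x \<in> N" for x using N that by (simp add: submod_def)
  have Nr: "rsmult M x r \<in> N" if "x \<in> N" "r \<in> carrier R" for x r using N that by (simp add: submod_def)
  show ?thesis
    unfolding submod_def quot_sub_def
  proof (intro conjI ballI)
    show "(\<lambda>y. Y +>\<^bsub>M\<^esub> y) ` N \<subseteq> carrier (quot M Y)"
      using Ns M.a_rcosetsI[OF Y.a_subset] by auto
    have "Y = Y +>\<^bsub>M\<^esub> \<zero>\<^bsub>M\<^esub>" using Y.a_rcos_const[OF Y.zero_closed] by simp
    then show "\<zero>\<^bsub>quot M Y\<^esub> \<in> (\<lambda>y. Y +>\<^bsub>M\<^esub> y) ` N"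
      using Nz by simp
    fix a assume "a \<in> (\<lambda>y. Y +>\<^bsub>M\<^esub> y) ` N"
    then obtain x where x: "x \<in> N" and ax: "a = Y +>\<^bsub>M\<^esub> x" by auto
    have xc: "x \<in> carrier M" using x Ns by auto
    {
      fix b assume "b \<in> (\<lambda>y. Y +>\<^bsub>M\<^esub> y) ` N"
      then obtain y where y: "y \<in> N" and "b = Y +>\<^bsub>M\<^esub> y" by auto
      have yc: "y \<in> carrier M" using y Ns by auto
      have "a \<oplus>\<^bsub>quot M Y\<^esub> b = Y +>\<^bsub>M\<^esub> (x \<oplus>\<^bsub>M\<^esub> y)"
        using Y.a_rcos_sum[OF xc yc] ax \<open>b = _\<close> by simp
      then show "a \<oplus>\<^bsub>quot M Y\<^esub> b \<in> (\<lambda>y. Y +>\<^bsub>M\<^esub> y) ` N"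
        using Na[OF x y] by simp
    }
    have ac: "a \<in> a_rcosets\<^bsub>M\<^esub> Y" using ax M.a_rcosetsI[OF Y.a_subset xc] by simp
    have "\<ominus>\<^bsub>quot M Y\<^esub> a = Y +>\<^bsub>M\<^esub> (\<ominus>\<^bsub>M\<^esub> x)"
      using quot_neg[OF Y.is_abelian_subgroup ac] Y.a_rcos_inv[OF xc] ax by simp
    then show "\<ominus>\<^bsub>quot M Y\<^esub> a \<in> (\<lambda>y. Y +>\<^bsub>M\<^esub> y) ` N"
      using Nn[OF x] by simp
    fix r assume r: "r \<in> carrier R"
    have "rsmult (quot M Y) a r = Y +>\<^bsub>M\<^esub> rsmult M x r"
      using rcos_smult[OF Y xc r] ax by simp
    then show "rsmult (quot M Y) a r \<in> (\<lambda>y. Y +>\<^bsub>M\<^esub> y) ` N"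
      using Nr[OF x r] by simp
  qed
qed

end



context right_module begin

lemma submod_sub: "submod R M N \<Longrightarrow> N \<subseteq> carrier M" by (simp add: submod_def)
lemma submod_zero: "submod R M N \<Longrightarrow> \<zero>\<^bsub>M\<^esub> \<in> N" by (simp add: submod_def)
lemma submod_add: "submod R M N \<Longrightarrow> x \<in> N \<Longrightarrow> y \<in> N \<Longrightarrow> x \<oplus>\<^bsub>M\<^esub> y \<in> N" by (simp add: submod_def)
lemma submod_neg: "submod R M N \<Longrightarrow> x \<in> N \<Longrightarrow> \<ominus>\<^bsub>M\<^esub> x \<in> N" by (simp add: submod_def)
lemma submod_smult: "submod R M N \<Longrightarrow> x \<in> N \<Longrightarrow> r \<in> carrier R \<Longrightarrow> rsmult M x r \<in> N" by (simp add: submod_def)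

lemma quot_sub_sum:
  assumes N1: "submod R M N1" and N2: "submod R M N2" and Y: "submod R M Y"
    and Y1: "Y \<subseteq> N1" and Y2: "Y \<subseteq> N2" and S: "N1 <+>\<^bsub>M\<^esub> N2 = carrier M"
  shows "quot_sub M N1 Y <+>\<^bsub>quot M Y\<^esub> quot_sub M N2 Y = a_rcosets\<^bsub>M\<^esub> Y"
proof -
  interpret Y: abelian_subgroup Y M using submod_abelian Y by blast
  show ?thesis
  proof
    show "quot_sub M N1 Y <+>\<^bsub>quot M Y\<^esub> quot_sub M N2 Y \<subseteq> a_rcosets\<^bsub>M\<^esub> Y"
    proof
      fix C assume "C \<in> quot_sub M N1 Y <+>\<^bsub>quot M Y\<^esub> quot_sub M N2 Y"
      then obtain a b where a: "a \<in> N1" and b: "b \<in> N2" and C: "C = (Y +>\<^bsub>M\<^esub> a) <+>\<^bsub>M\<^esub> (Y +>\<^bsub>M\<^esub> b)"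
        unfolding set_add_def'[of "quot M Y"] quot_sub_def by auto
      have ac: "a \<in> carrier M" and bc: "b \<in> carrier M" using a b submod_sub N1 N2 by auto
      have "C = Y +>\<^bsub>M\<^esub> (a \<oplus>\<^bsub>M\<^esub> b)" using C Y.a_rcos_sum[OF ac bc] by simp
      then show "C \<in> a_rcosets\<^bsub>M\<^esub> Y" using M.a_rcosetsI[OF Y.a_subset] ac bc by simp
    qed
    show "a_rcosets\<^bsub>M\<^esub> Y \<subseteq> quot_sub M N1 Y <+>\<^bsub>quot M Y\<^esub> quot_sub M N2 Y"
    proof
      fix C assume "C \<in> a_rcosets\<^bsub>M\<^esub> Y"
      then obtain m where m: "m \<in> carrier M" and C: "C = Y +>\<^bsub>M\<^esub> m"
        unfolding A_RCOSETS_def' by auto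
      have "m \<in> N1 <+>\<^bsub>M\<^esub> N2" using S m by simp
      then obtain a b where a: "a \<in> N1" and b: "b \<in> N2" and mab: "m = a \<oplus>\<^bsub>M\<^esub> b"
        unfolding set_add_def' by auto
      have ac: "a \<in> carrier M" and bc: "b \<in> carrier M" using a b submod_sub N1 N2 by auto
      have "C = (Y +>\<^bsub>M\<^esub> a) <+>\<^bsub>M\<^esub> (Y +>\<^bsub>M\<^esub> b)" using C mab Y.a_rcos_sum[OF ac bc] by simp
      then show "C \<in> quot_sub M N1 Y <+>\<^bsub>quot M Y\<^esub> quot_sub M N2 Y"
        unfolding set_add_def'[of "quot M Y"] quot_sub_def using a b by auto
    qed
  qed
qed

lemma quot_sub_full:
  assumes N: "submod R M N" and Y: "submod R M Y" and YN: "Y \<subseteq> N"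
    and F: "quot_sub M N Y = a_rcosets\<^bsub>M\<^esub> Y"
  shows "N = carrier M"
proof
  interpret Y: abelian_subgroup Y M using submod_abelian Y by blast
  show "N \<subseteq> carrier M" using N submod_sub by auto
  show "carrier M \<subseteq> N"
  proof
    fix m assume m: "m \<in> carrier M"
    have "Y +>\<^bsub>M\<^esub> m \<in> quot_sub M N Y" using F M.a_rcosetsI[OF Y.a_subset m] by simp
    then obtain n where n: "n \<in> N" and e: "Y +>\<^bsub>M\<^esub> m = Y +>\<^bsub>M\<^esub> n" unfolding quot_sub_def by auto
    have "m \<in> Y +>\<^bsub>M\<^esub> n" using Y.a_rcos_self[OF m] e by simp
    then obtain h where h: "h \<in> Y" and mh: "m = h \<oplus>\<^bsub>M\<^esub> n" unfolding a_r_coset_def' by auto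
    show "m \<in> N" using mh submod_add[OF N _ n] h YN by auto
  qed
qed

lemma small_quot_elim:
  assumes Sm: "small R (quot M Y) (quot_sub M N1 Y)"
    and N1: "submod R M N1" and N2: "submod R M N2" and Y: "submod R M Y"
    and Y1: "Y \<subseteq> N1" and Y2: "Y \<subseteq> N2" and S: "N1 <+>\<^bsub>M\<^esub> N2 = carrier M"
  shows "N2 = carrier M"
proof -
  have "quot_sub M N2 Y = carrier (quot M Y)"
    using Sm quot_sub_submod[OF N2 Y Y2] quot_sub_sum[OF N1 N2 Y Y1 Y2 S]
    unfolding small_def by auto
  then show ?thesis using quot_sub_full[OF N2 Y Y2] by simp
qed

lemma preimage_submod:
  assumes Y: "submod R M Y" and L: "submod R (quot M Y) L"
  shows "submod R M (\<Union>L)" "Y \<subseteq> \<Union>L"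
proof -
  interpret Y: abelian_subgroup Y M using submod_abelian Y by blast
  have Lc: "L \<subseteq> a_rcosets\<^bsub>M\<^esub> Y" using L by (simp add: submod_def)
  have YL: "Y \<in> L" using L by (simp add: submod_def)
  then show "Y \<subseteq> \<Union>L" by auto
  have Ladd: "C <+>\<^bsub>M\<^esub> C' \<in> L" if "C \<in> L" "C' \<in> L" for C C'
    using L that unfolding submod_def by simp
  have Lneg: "a_set_inv\<^bsub>M\<^esub> C \<in> L" if "C \<in> L" for C
  proof -
    have "\<ominus>\<^bsub>quot M Y\<^esub> C \<in> L" using L that unfolding submod_def by blast
    moreover have "C \<in> a_rcosets\<^bsub>M\<^esub> Y" using Lc that by blast
    ultimately show ?thesis using quot_neg[OF Y.is_abelian_subgroup] by simp
  qed
  have Lsm: "(\<Union>c\<in>C. {rsmult M c r}) <+>\<^bsub>M\<^esub> Y \<in> L" if "C \<in> L" "r \<in> carrier R" for C r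
    using L that unfolding submod_def by simp
  show "submod R M (\<Union>L)"
    unfolding submod_def
  proof (intro conjI ballI)
    show "\<Union>L \<subseteq> carrier M"
    proof
      fix x assume "x \<in> \<Union>L"
      then obtain C where "C \<in> L" "x \<in> C" by blast
      then show "x \<in> carrier M" using Lc Y.a_rcosets_carrier by blast
    qed
    show "\<zero>\<^bsub>M\<^esub> \<in> \<Union>L" using YL Y.zero_closed by blast
    fix x assume "x \<in> \<Union>L"
    then obtain C where C: "C \<in> L" "x \<in> C" by auto
    {
      fix y assume "y \<in> \<Union>L"
      then obtain C' where C': "C' \<in> L" "y \<in> C'" by auto
      have "x \<oplus>\<^bsub>M\<^esub> y \<in> C <+>\<^bsub>M\<^esub> C'" using C C' unfolding set_add_def' by auto
      then show "x \<oplus>\<^bsub>M\<^esub> y \<in> \<Union>L" using Ladd[OF C(1) C'(1)] by auto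
    }
    have "\<ominus>\<^bsub>M\<^esub> x \<in> a_set_inv\<^bsub>M\<^esub> C" using C unfolding A_SET_INV_def' by auto
    then show "\<ominus>\<^bsub>M\<^esub> x \<in> \<Union>L" using Lneg[OF C(1)] by auto
    fix r assume r: "r \<in> carrier R"
    have xc: "x \<in> carrier M" using C Lc Y.a_rcosets_carrier by blast
    have e: "rsmult M x r \<oplus>\<^bsub>M\<^esub> \<zero>\<^bsub>M\<^esub> = rsmult M x r" using rsmult_closed[OF xc r] by simp
    have "rsmult M x r \<oplus>\<^bsub>M\<^esub> \<zero>\<^bsub>M\<^esub> \<in> (\<Union>c\<in>C. {rsmult M c r}) <+>\<^bsub>M\<^esub> Y"
      unfolding set_add_def' using C(2) Y.zero_closed by blast
    then have "rsmult M x r \<in> (\<Union>c\<in>C. {rsmult M c r}) <+>\<^bsub>M\<^esub> Y" using e by simp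
    then show "rsmult M x r \<in> \<Union>L" using Lsm[OF C(1) r] by auto
  qed
qed

lemma preimage_full:
  assumes Y: "submod R M Y" and L: "submod R (quot M Y) L" and F: "\<Union>L = carrier M"
  shows "L = carrier (quot M Y)"
proof
  interpret Y: abelian_subgroup Y M using submod_abelian Y by blast
  have Lc: "L \<subseteq> a_rcosets\<^bsub>M\<^esub> Y" using L by (simp add: submod_def)
  then show "L \<subseteq> carrier (quot M Y)" by simp
  show "carrier (quot M Y) \<subseteq> L"
  proof
    fix C assume "C \<in> carrier (quot M Y)"
    then obtain m where m: "m \<in> carrier M" and Cm: "C = Y +>\<^bsub>M\<^esub> m"
      unfolding quot_simps A_RCOSETS_def' by auto
    obtain C' where C': "C' \<in> L" "m \<in> C'" using F m by auto
    obtain c where c: "c \<in> carrier M" and C'c: "C' = Y +>\<^bsub>M\<^esub> c"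
      using C'(1) Lc unfolding A_RCOSETS_def' by auto
    have "Y +>\<^bsub>M\<^esub> c = Y +>\<^bsub>M\<^esub> m" using Y.a_repr_independence'[of m c] C' C'c c by simp
    then show "C \<in> L" using Cm C'c C' by simp
  qed
qed

lemma small_quot_self:
  assumes Y: "submod R M Y"
  shows "small R (quot M Y) (quot_sub M Y Y)"
proof -
  interpret Y: abelian_subgroup Y M using submod_abelian Y by blast
  have q: "quot_sub M Y Y = {Y}"
  proof
    show "quot_sub M Y Y \<subseteq> {Y}" unfolding quot_sub_def using Y.a_rcos_const by auto
    have "Y +>\<^bsub>M\<^esub> \<zero>\<^bsub>M\<^esub> = Y" by (rule Y.a_rcos_const[OF Y.zero_closed])
    then show "{Y} \<subseteq> quot_sub M Y Y" unfolding quot_sub_def using Y.zero_closed by blast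
  qed
  show ?thesis
    unfolding small_def
  proof (intro conjI allI impI)
    show "submod R (quot M Y) (quot_sub M Y Y)" using quot_sub_submod[OF Y Y] by simp
    fix L assume A: "submod R (quot M Y) L \<and> quot_sub M Y Y <+>\<^bsub>quot M Y\<^esub> L = carrier (quot M Y)"
    have Lc: "L \<subseteq> a_rcosets\<^bsub>M\<^esub> Y" using A by (simp add: submod_def)
    have "quot_sub M Y Y <+>\<^bsub>quot M Y\<^esub> L = (\<lambda>l. Y <+>\<^bsub>M\<^esub> l) ` L"
      unfolding q set_add_def'[of "quot M Y"] by auto
    also have "\<dots> = L"
    proof -
      have "\<And>l. l \<in> L \<Longrightarrow> Y <+>\<^bsub>M\<^esub> l = l" using Lc Y.rcosets_add_eq by blast
      then show ?thesis by simp
    qed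
    finally show "L = carrier (quot M Y)" using A by simp
  qed
qed

end



context right_module begin

lemma mem_sum: "x \<in> A <+>\<^bsub>M\<^esub> B \<longleftrightarrow> (\<exists>a\<in>A. \<exists>b\<in>B. x = a \<oplus>\<^bsub>M\<^esub> b)"
  unfolding set_add_def' by auto

lemma sum_submod:
  assumes A: "submod R M A" and B: "submod R M B"
  shows "submod R M (A <+>\<^bsub>M\<^esub> B)"
  unfolding submod_def
proof (intro conjI ballI)
  have As: "A \<subseteq> carrier M" and Bs: "B \<subseteq> carrier M" using A B submod_sub by auto
  then show "A <+>\<^bsub>M\<^esub> B \<subseteq> carrier M" by (rule M.set_add_closed)
  show "\<zero>\<^bsub>M\<^esub> \<in> A <+>\<^bsub>M\<^esub> B" unfolding mem_sum
    using submod_zero[OF A] submod_zero[OF B] by force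
  fix x assume "x \<in> A <+>\<^bsub>M\<^esub> B"
  then obtain a b where a: "a \<in> A" and b: "b \<in> B" and x: "x = a \<oplus>\<^bsub>M\<^esub> b" unfolding mem_sum by auto
  have ac: "a \<in> carrier M" and bc: "b \<in> carrier M" using a b As Bs by auto
  {
    fix y assume "y \<in> A <+>\<^bsub>M\<^esub> B"
    then obtain a' b' where a': "a' \<in> A" and b': "b' \<in> B" and y: "y = a' \<oplus>\<^bsub>M\<^esub> b'" unfolding mem_sum by auto
    have ac': "a' \<in> carrier M" and bc': "b' \<in> carrier M" using a' b' As Bs by auto
    have "x \<oplus>\<^bsub>M\<^esub> y = (a \<oplus>\<^bsub>M\<^esub> a') \<oplus>\<^bsub>M\<^esub> (b \<oplus>\<^bsub>M\<^esub> b')"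
      unfolding x y using ac bc ac' bc' by (simp add: M.a_ac)
    then show "x \<oplus>\<^bsub>M\<^esub> y \<in> A <+>\<^bsub>M\<^esub> B" unfolding mem_sum
      using submod_add[OF A a a'] submod_add[OF B b b'] by blast
  }
  have "\<ominus>\<^bsub>M\<^esub> x = (\<ominus>\<^bsub>M\<^esub> a) \<oplus>\<^bsub>M\<^esub> (\<ominus>\<^bsub>M\<^esub> b)"
    unfolding x using ac bc by (simp add: M.minus_add)
  then show "\<ominus>\<^bsub>M\<^esub> x \<in> A <+>\<^bsub>M\<^esub> B" unfolding mem_sum
    using submod_neg[OF A a] submod_neg[OF B b] by blast
  fix r assume r: "r \<in> carrier R"
  have "rsmult M x r = rsmult M a r \<oplus>\<^bsub>M\<^esub> rsmult M b r"
    unfolding x using ac bc r by (simp add: rsmult_add_l)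
  then show "rsmult M x r \<in> A <+>\<^bsub>M\<^esub> B" unfolding mem_sum
    using submod_smult[OF A a r] submod_smult[OF B b r] by blast
qed

lemma sub_sum_l: "submod R M A \<Longrightarrow> submod R M B \<Longrightarrow> A \<subseteq> A <+>\<^bsub>M\<^esub> B"
proof
  fix x assume A: "submod R M A" and B: "submod R M B" and x: "x \<in> A"
  have "x = x \<oplus>\<^bsub>M\<^esub> \<zero>\<^bsub>M\<^esub>" using x submod_sub[OF A] by auto
  then show "x \<in> A <+>\<^bsub>M\<^esub> B" unfolding mem_sum using x submod_zero[OF B] by blast
qed

lemma sub_sum_r: "submod R M A \<Longrightarrow> submod R M B \<Longrightarrow> B \<subseteq> A <+>\<^bsub>M\<^esub> B"
proof
  fix x assume A: "submod R M A" and B: "submod R M B" and x: "x \<in> B"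
  have "x = \<zero>\<^bsub>M\<^esub> \<oplus>\<^bsub>M\<^esub> x" using x submod_sub[OF B] by auto
  then show "x \<in> A <+>\<^bsub>M\<^esub> B" unfolding mem_sum using x submod_zero[OF A] by blast
qed

lemma int_submod: "submod R M A \<Longrightarrow> submod R M B \<Longrightarrow> submod R M (A \<inter> B)"
  unfolding submod_def by auto

lemma endo_zero:
  assumes f: "endo R M f" shows "f \<zero>\<^bsub>M\<^esub> = \<zero>\<^bsub>M\<^esub>"
proof -
  have fz: "f \<zero>\<^bsub>M\<^esub> \<in> carrier M" using f unfolding endo_def by auto
  have "f \<zero>\<^bsub>M\<^esub> = f (\<zero>\<^bsub>M\<^esub> \<oplus>\<^bsub>M\<^esub> \<zero>\<^bsub>M\<^esub>)" by simp
  also have "\<dots> = f \<zero>\<^bsub>M\<^esub> \<oplus>\<^bsub>M\<^esub> f \<zero>\<^bsub>M\<^esub>" using f unfolding endo_def by (meson M.zero_closed)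
  finally show ?thesis using fz by (metis M.l_zero M.add.right_cancel M.zero_closed)
qed

lemma endo_neg:
  assumes f: "endo R M f" and x: "x \<in> carrier M" shows "f (\<ominus>\<^bsub>M\<^esub> x) = \<ominus>\<^bsub>M\<^esub> f x"
proof -
  have c: "f x \<in> carrier M" "f (\<ominus>\<^bsub>M\<^esub> x) \<in> carrier M" using f x unfolding endo_def by auto
  have "f (\<ominus>\<^bsub>M\<^esub> x) \<oplus>\<^bsub>M\<^esub> f x = f (\<ominus>\<^bsub>M\<^esub> x \<oplus>\<^bsub>M\<^esub> x)" using f x unfolding endo_def by auto
  also have "\<dots> = \<zero>\<^bsub>M\<^esub>" using x endo_zero[OF f] by (simp add: M.l_neg)
  finally show ?thesis using c by (metis M.add.inv_equality)
qed

lemma image_submod: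
  assumes f: "endo R M f" and D: "submod R M D"
  shows "submod R M (f ` D)"
  unfolding submod_def
proof (intro conjI ballI)
  have Ds: "D \<subseteq> carrier M" using D submod_sub by auto
  show "f ` D \<subseteq> carrier M" using f Ds unfolding endo_def by auto
  show "\<zero>\<^bsub>M\<^esub> \<in> f ` D" using endo_zero[OF f] submod_zero[OF D] by (metis image_eqI)
  fix x assume "x \<in> f ` D"
  then obtain d where d: "d \<in> D" and x: "x = f d" by auto
  have dc: "d \<in> carrier M" using d Ds by auto
  {
    fix y assume "y \<in> f ` D"
    then obtain d' where d': "d' \<in> D" and y: "y = f d'" by auto
    have "x \<oplus>\<^bsub>M\<^esub> y = f (d \<oplus>\<^bsub>M\<^esub> d')" using f d' Ds dc unfolding x y endo_def by auto
    then show "x \<oplus>\<^bsub>M\<^esub> y \<in> f ` D" using submod_add[OF D d d'] by simp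
  }
  show "\<ominus>\<^bsub>M\<^esub> x \<in> f ` D" using endo_neg[OF f dc] submod_neg[OF D d] x by (metis image_eqI)
  fix r assume r: "r \<in> carrier R"
  have "rsmult M x r = f (rsmult M d r)" using f dc r unfolding x endo_def by auto
  then show "rsmult M x r \<in> f ` D" using submod_smult[OF D d r] by simp
qed

end



context right_module begin

lemma bwd:
  assumes X: "submod R M X" and D: "submod R M D" and A: "small R M A"
    and XDA: "X = D <+>\<^bsub>M\<^esub> A"
  shows "beta_star R M X D"
proof -
  interpret Dg: abelian_subgroup D M using submod_abelian D by blast
  have Asub: "submod R M A" using A by (simp add: small_def)
  have As: "A \<subseteq> carrier M" using submod_sub[OF Asub] .
  have DX: "D \<subseteq> X" using sub_sum_l[OF D Asub] XDA by simp
  have XD: "X <+>\<^bsub>M\<^esub> D = X"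
  proof
    show "X <+>\<^bsub>M\<^esub> D \<subseteq> X" using submod_add[OF X] DX unfolding subset_iff mem_sum by blast
    show "X \<subseteq> X <+>\<^bsub>M\<^esub> D" by (rule sub_sum_l[OF X D])
  qed
  have S1: "small R (quot M X) (quot_sub M (X <+>\<^bsub>M\<^esub> D) X)"
    using small_quot_self[OF X] XD by simp
  have S2: "small R (quot M D) (quot_sub M X D)"
    unfolding small_def
  proof (intro conjI allI impI)
    show "submod R (quot M D) (quot_sub M X D)" by (rule quot_sub_submod[OF X D DX])
    fix L assume LL: "submod R (quot M D) L \<and> quot_sub M X D <+>\<^bsub>quot M D\<^esub> L = carrier (quot M D)"
    then have L: "submod R (quot M D) L" and LS: "quot_sub M X D <+>\<^bsub>quot M D\<^esub> L = a_rcosets\<^bsub>M\<^esub> D" by auto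
    have P: "submod R M (\<Union>L)" and DP: "D \<subseteq> \<Union>L" using preimage_submod[OF D L] by auto
    have Ps: "\<Union>L \<subseteq> carrier M" using submod_sub[OF P] .
    have "A <+>\<^bsub>M\<^esub> \<Union>L = carrier M"
    proof
      show "A <+>\<^bsub>M\<^esub> \<Union>L \<subseteq> carrier M" using As Ps by (rule M.set_add_closed)
      show "carrier M \<subseteq> A <+>\<^bsub>M\<^esub> \<Union>L"
      proof
        fix m assume m: "m \<in> carrier M"
        have "D +>\<^bsub>M\<^esub> m \<in> quot_sub M X D <+>\<^bsub>quot M D\<^esub> L"
          using LS M.a_rcosetsI[OF Dg.a_subset m] by simp
        then obtain x C where x: "x \<in> X" and C: "C \<in> L" and e: "D +>\<^bsub>M\<^esub> m = (D +>\<^bsub>M\<^esub> x) <+>\<^bsub>M\<^esub> C"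
          unfolding set_add_def'[of "quot M D"] quot_sub_def by auto
        have "m \<in> (D +>\<^bsub>M\<^esub> x) <+>\<^bsub>M\<^esub> C" using Dg.a_rcos_self[OF m] e by simp
        then obtain u c where u: "u \<in> D +>\<^bsub>M\<^esub> x" and c: "c \<in> C" and mu: "m = u \<oplus>\<^bsub>M\<^esub> c"
          unfolding mem_sum by auto
        obtain d where d: "d \<in> D" and ud: "u = d \<oplus>\<^bsub>M\<^esub> x" using u unfolding a_r_coset_def' by auto
        obtain d' a where d': "d' \<in> D" and a: "a \<in> A" and xd: "x = d' \<oplus>\<^bsub>M\<^esub> a"
          using x XDA mem_sum[of x D A] by auto
        have cP: "c \<in> \<Union>L" using c C by auto
        have cc: "c \<in> carrier M" using cP Ps by auto
        have dc: "d \<in> carrier M" "d' \<in> carrier M" using d d' Dg.a_subset by auto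
        have ac: "a \<in> carrier M" using a As by auto
        have "m = a \<oplus>\<^bsub>M\<^esub> ((d \<oplus>\<^bsub>M\<^esub> d') \<oplus>\<^bsub>M\<^esub> c)"
          unfolding mu ud xd using cc dc ac by (simp add: M.a_ac)
        moreover have "(d \<oplus>\<^bsub>M\<^esub> d') \<oplus>\<^bsub>M\<^esub> c \<in> \<Union>L"
          using submod_add[OF P] DP d d' cP by blast
        ultimately show "m \<in> A <+>\<^bsub>M\<^esub> \<Union>L" unfolding mem_sum using a by blast
      qed
    qed
    then have "\<Union>L = carrier M" using A P unfolding small_def by blast
    then show "L = carrier (quot M D)" by (rule preimage_full[OF D L])
  qed
  show ?thesis unfolding beta_star_def using S1 S2 XD by simp
qed

end



context right_module begin

lemma fwd:
  assumes pi: "pi_projective R M" and X: "submod R M X" and DS: "direct_summand R M D"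
    and B: "beta_star R M X D"
  shows "\<exists>D A. direct_summand R M D \<and> small R M A \<and> X = D <+>\<^bsub>M\<^esub> A \<and> D \<inter> A = {\<zero>\<^bsub>M\<^esub>}"
proof -
  have D: "submod R M D" using DS by (simp add: direct_summand_def)
  obtain E where E: "submod R M E" and DE: "D <+>\<^bsub>M\<^esub> E = carrier M" and DiE: "D \<inter> E = {\<zero>\<^bsub>M\<^esub>}"
    using DS unfolding direct_summand_def by blast
  have S1: "small R (quot M X) (quot_sub M (X <+>\<^bsub>M\<^esub> D) X)"
   and S2: "small R (quot M D) (quot_sub M (X <+>\<^bsub>M\<^esub> D) D)" using B unfolding beta_star_def by auto
  have Xs: "X \<subseteq> carrier M" and Ds: "D \<subseteq> carrier M" and Es: "E \<subseteq> carrier M"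
    using X D E submod_sub by auto
  have XD: "submod R M (X <+>\<^bsub>M\<^esub> D)" by (rule sum_submod[OF X D])
  have XE: "submod R M (X <+>\<^bsub>M\<^esub> E)" by (rule sum_submod[OF X E])
  have "(X <+>\<^bsub>M\<^esub> D) <+>\<^bsub>M\<^esub> (X <+>\<^bsub>M\<^esub> E) = carrier M"
  proof
    show "(X <+>\<^bsub>M\<^esub> D) <+>\<^bsub>M\<^esub> (X <+>\<^bsub>M\<^esub> E) \<subseteq> carrier M"
      using submod_sub[OF XD] submod_sub[OF XE] by (rule M.set_add_closed)
    show "carrier M \<subseteq> (X <+>\<^bsub>M\<^esub> D) <+>\<^bsub>M\<^esub> (X <+>\<^bsub>M\<^esub> E)"
    proof
      fix m assume "m \<in> carrier M"
      then obtain d e where d: "d \<in> D" and e: "e \<in> E" and m: "m = d \<oplus>\<^bsub>M\<^esub> e"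
        using DE mem_sum[of m D E] by auto
      have "d \<in> X <+>\<^bsub>M\<^esub> D" "e \<in> X <+>\<^bsub>M\<^esub> E" using d e sub_sum_r[OF X D] sub_sum_r[OF X E] by auto
      then show "m \<in> (X <+>\<^bsub>M\<^esub> D) <+>\<^bsub>M\<^esub> (X <+>\<^bsub>M\<^esub> E)"
        using m mem_sum[of m "X <+>\<^bsub>M\<^esub> D" "X <+>\<^bsub>M\<^esub> E"] by blast
    qed
  qed
  then have XEM: "X <+>\<^bsub>M\<^esub> E = carrier M"
    by (rule small_quot_elim[OF S1 XD XE X sub_sum_l[OF X D] sub_sum_l[OF X E]])
  then obtain f where f: "endo R M f" and fX: "f ` carrier M \<subseteq> X"
    and fE: "(\<lambda>x. x \<ominus>\<^bsub>M\<^esub> f x) ` carrier M \<subseteq> E"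
    using pi X E unfolding pi_projective_def by blast
  have fc: "f x \<in> carrier M" if "x \<in> carrier M" for x using f that unfolding endo_def by auto
  have fEx: "x \<ominus>\<^bsub>M\<^esub> f x \<in> E" if "x \<in> carrier M" for x using fE that by auto
  define D' where "D' = f ` D"
  have D': "submod R M D'" unfolding D'_def by (rule image_submod[OF f D])
  have D's: "D' \<subseteq> carrier M" using submod_sub[OF D'] .
  have D'X: "D' \<subseteq> X" unfolding D'_def using fX Ds by auto
  have D'E: "D' <+>\<^bsub>M\<^esub> E = carrier M"
  proof
    show "D' <+>\<^bsub>M\<^esub> E \<subseteq> carrier M" using D's Es by (rule M.set_add_closed)
    show "carrier M \<subseteq> D' <+>\<^bsub>M\<^esub> E"
    proof
      fix m assume "m \<in> carrier M"
      then obtain d e where d: "d \<in> D" and e: "e \<in> E" and m: "m = d \<oplus>\<^bsub>M\<^esub> e"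
        using DE mem_sum[of m D E] by auto
      have dc: "d \<in> carrier M" and ec: "e \<in> carrier M" using d e Ds Es by auto
      have fdc: "f d \<in> carrier M" using fc dc .
      have "m = f d \<oplus>\<^bsub>M\<^esub> ((d \<ominus>\<^bsub>M\<^esub> f d) \<oplus>\<^bsub>M\<^esub> e)"
      proof -
        have "f d \<oplus>\<^bsub>M\<^esub> ((d \<ominus>\<^bsub>M\<^esub> f d) \<oplus>\<^bsub>M\<^esub> e) = f d \<oplus>\<^bsub>M\<^esub> (\<ominus>\<^bsub>M\<^esub> f d \<oplus>\<^bsub>M\<^esub> (d \<oplus>\<^bsub>M\<^esub> e))"
          using dc ec fdc by (simp add: M.minus_eq M.a_ac)
        also have "\<dots> = d \<oplus>\<^bsub>M\<^esub> e" using dc ec fdc by (simp add: M.r_neg2)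
        finally show ?thesis using m by simp
      qed
      moreover have "(d \<ominus>\<^bsub>M\<^esub> f d) \<oplus>\<^bsub>M\<^esub> e \<in> E" using submod_add[OF E fEx[OF dc] e] .
      moreover have "f d \<in> D'" unfolding D'_def using d by auto
      ultimately show "m \<in> D' <+>\<^bsub>M\<^esub> E" unfolding mem_sum by blast
    qed
  qed
  have D'iE: "D' \<inter> E = {\<zero>\<^bsub>M\<^esub>}"
  proof
    show "{\<zero>\<^bsub>M\<^esub>} \<subseteq> D' \<inter> E" using submod_zero[OF D'] submod_zero[OF E] by auto
    show "D' \<inter> E \<subseteq> {\<zero>\<^bsub>M\<^esub>}"
    proof
      fix y assume y: "y \<in> D' \<inter> E"
      then obtain d where d: "d \<in> D" and yd: "y = f d" unfolding D'_def by auto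
      have dc: "d \<in> carrier M" using d Ds by auto
      have fdc: "f d \<in> carrier M" using fc dc .
      have "d = (d \<ominus>\<^bsub>M\<^esub> f d) \<oplus>\<^bsub>M\<^esub> f d" using dc fdc by (simp add: M.minus_eq M.a_assoc M.l_neg)
      moreover have "(d \<ominus>\<^bsub>M\<^esub> f d) \<oplus>\<^bsub>M\<^esub> f d \<in> E" using submod_add[OF E fEx[OF dc]] y yd by auto
      ultimately have "d \<in> D \<inter> E" using d by simp
      then have "d = \<zero>\<^bsub>M\<^esub>" using DiE by auto
      then show "y \<in> {\<zero>\<^bsub>M\<^esub>}" using yd endo_zero[OF f] by simp
    qed
  qed
  have DS': "direct_summand R M D'" unfolding direct_summand_def using D' E D'E D'iE by blast
  define K where "K = X \<inter> E"
  have K: "submod R M K" unfolding K_def by (rule int_submod[OF X E])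
  have XK: "X = D' <+>\<^bsub>M\<^esub> K"
  proof
    show "D' <+>\<^bsub>M\<^esub> K \<subseteq> X" using submod_add[OF X] D'X unfolding subset_iff mem_sum K_def by blast
    show "X \<subseteq> D' <+>\<^bsub>M\<^esub> K"
    proof
      fix x assume x: "x \<in> X"
      then have xc: "x \<in> carrier M" using Xs by auto
      then obtain d e where d: "d \<in> D'" and e: "e \<in> E" and xde: "x = d \<oplus>\<^bsub>M\<^esub> e"
        using D'E mem_sum[of x D' E] by auto
      have dc: "d \<in> carrier M" and ec: "e \<in> carrier M" using d e D's Es by auto
      have "e = \<ominus>\<^bsub>M\<^esub> d \<oplus>\<^bsub>M\<^esub> x" using xde dc ec by (simp add: M.r_neg1)
      moreover have "\<ominus>\<^bsub>M\<^esub> d \<oplus>\<^bsub>M\<^esub> x \<in> X" using submod_add[OF X submod_neg[OF X] x] d D'X by auto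
      ultimately have "e \<in> K" using e unfolding K_def by simp
      then show "x \<in> D' <+>\<^bsub>M\<^esub> K" using d xde unfolding mem_sum by blast
    qed
  qed
  have D'iK: "D' \<inter> K = {\<zero>\<^bsub>M\<^esub>}" using D'iE submod_zero[OF X] submod_zero[OF D'] unfolding K_def by auto
  have smallK: "small R M K"
    unfolding small_def
  proof (intro conjI allI impI)
    show "submod R M K" by (rule K)
    fix L assume LL: "submod R M L \<and> K <+>\<^bsub>M\<^esub> L = carrier M"
    then have L: "submod R M L" and KL: "K <+>\<^bsub>M\<^esub> L = carrier M" by auto
    have Ls: "L \<subseteq> carrier M" using submod_sub[OF L] .
    define L0 where "L0 = L \<inter> E"
    have L0: "submod R M L0" unfolding L0_def by (rule int_submod[OF L E])
    have L0D: "submod R M (L0 <+>\<^bsub>M\<^esub> D)" by (rule sum_submod[OF L0 D])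
    have EKL0: "e \<in> K <+>\<^bsub>M\<^esub> L0" if e: "e \<in> E" for e
    proof -
      have ec: "e \<in> carrier M" using e Es by auto
      then obtain k l where k: "k \<in> K" and l: "l \<in> L" and ekl: "e = k \<oplus>\<^bsub>M\<^esub> l"
        using KL mem_sum[of e K L] by auto
      have kc: "k \<in> carrier M" and lc: "l \<in> carrier M" using k l Ls submod_sub[OF K] by auto
      have "l = \<ominus>\<^bsub>M\<^esub> k \<oplus>\<^bsub>M\<^esub> e" using ekl kc lc by (simp add: M.r_neg1)
      moreover have "\<ominus>\<^bsub>M\<^esub> k \<oplus>\<^bsub>M\<^esub> e \<in> E" using submod_add[OF E submod_neg[OF E] e] k unfolding K_def by auto
      ultimately have "l \<in> L0" using l unfolding L0_def by simp
      then show ?thesis using k ekl unfolding mem_sum by blast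
    qed
    have "(X <+>\<^bsub>M\<^esub> D) <+>\<^bsub>M\<^esub> (L0 <+>\<^bsub>M\<^esub> D) = carrier M"
    proof
      show "(X <+>\<^bsub>M\<^esub> D) <+>\<^bsub>M\<^esub> (L0 <+>\<^bsub>M\<^esub> D) \<subseteq> carrier M"
        using submod_sub[OF XD] submod_sub[OF L0D] by (rule M.set_add_closed)
      show "carrier M \<subseteq> (X <+>\<^bsub>M\<^esub> D) <+>\<^bsub>M\<^esub> (L0 <+>\<^bsub>M\<^esub> D)"
      proof
        fix m assume "m \<in> carrier M"
        then obtain d e where d: "d \<in> D" and e: "e \<in> E" and m: "m = d \<oplus>\<^bsub>M\<^esub> e"
          using DE mem_sum[of m D E] by auto
        obtain k l where k: "k \<in> K" and l: "l \<in> L0" and ekl: "e = k \<oplus>\<^bsub>M\<^esub> l"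
          using EKL0[OF e] mem_sum[of e K L0] by auto
        have kX: "k \<in> X" using k unfolding K_def by auto
        have c: "d \<in> carrier M" "k \<in> carrier M" "l \<in> carrier M"
          using d kX l Ds Xs submod_sub[OF L0] by auto
        have "m = (k \<oplus>\<^bsub>M\<^esub> d) \<oplus>\<^bsub>M\<^esub> (l \<oplus>\<^bsub>M\<^esub> \<zero>\<^bsub>M\<^esub>)" using m ekl c by (simp add: M.a_ac)
        moreover have "k \<oplus>\<^bsub>M\<^esub> d \<in> X <+>\<^bsub>M\<^esub> D" using kX d mem_sum[of _ X D] by blast
        moreover have "l \<oplus>\<^bsub>M\<^esub> \<zero>\<^bsub>M\<^esub> \<in> L0 <+>\<^bsub>M\<^esub> D" using l submod_zero[OF D] mem_sum[of _ L0 D] by blast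
        ultimately show "m \<in> (X <+>\<^bsub>M\<^esub> D) <+>\<^bsub>M\<^esub> (L0 <+>\<^bsub>M\<^esub> D)"
          using mem_sum[of m "X <+>\<^bsub>M\<^esub> D" "L0 <+>\<^bsub>M\<^esub> D"] by blast
      qed
    qed
    then have L0DM: "L0 <+>\<^bsub>M\<^esub> D = carrier M"
      by (rule small_quot_elim[OF S2 XD L0D D sub_sum_r[OF X D] sub_sum_r[OF L0 D]])
    have EL: "E \<subseteq> L"
    proof
      fix e assume e: "e \<in> E"
      then have ec: "e \<in> carrier M" using Es by auto
      then obtain l d where l: "l \<in> L0" and d: "d \<in> D" and eld: "e = l \<oplus>\<^bsub>M\<^esub> d"
        using L0DM mem_sum[of e L0 D] by auto
      have lc: "l \<in> carrier M" and dc: "d \<in> carrier M" using l d Ds submod_sub[OF L0] by auto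
      have "d = \<ominus>\<^bsub>M\<^esub> l \<oplus>\<^bsub>M\<^esub> e" using eld lc dc by (simp add: M.r_neg1)
      moreover have "\<ominus>\<^bsub>M\<^esub> l \<oplus>\<^bsub>M\<^esub> e \<in> E" using submod_add[OF E submod_neg[OF E] e] l unfolding L0_def by auto
      ultimately have "d \<in> D \<inter> E" using d by simp
      then have "d = \<zero>\<^bsub>M\<^esub>" using DiE by auto
      then have "e = l" using eld lc by simp
      then show "e \<in> L" using l unfolding L0_def by auto
    qed
    show "L = carrier M"
    proof
      show "L \<subseteq> carrier M" by (rule Ls)
      show "carrier M \<subseteq> L"
      proof
        fix m assume "m \<in> carrier M"
        then obtain k l where k: "k \<in> K" and l: "l \<in> L" and mkl: "m = k \<oplus>\<^bsub>M\<^esub> l"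
          using KL mem_sum[of m K L] by auto
        have "k \<in> L" using k EL unfolding K_def by auto
        then show "m \<in> L" using submod_add[OF L _ l] mkl by simp
      qed
    qed
  qed
  show ?thesis using DS' smallK XK D'iK by blast
qed

end


theorem proposition3p17:
  fixes R :: "('a, 'c) ring_scheme" and M :: "('a, 'b, 'd) rmodule_scheme"
  assumes "right_module R M" and "pi_projective R M"
  shows "principally_Goldie_star_lifting R M \<longleftrightarrow>
    (\<forall>X. cyclic_submod R M X \<longrightarrow>
       (\<exists>D A. direct_summand R M D \<and> small R M A \<and>
              X = D <+>\<^bsub>M\<^esub> A \<and> D \<inter> A = {\<zero>\<^bsub>M\<^esub>}))"
proof -
  interpret right_module R M by fact
  show ?thesis
  proof
    assume P: "principally_Goldie_star_lifting R M"
    show "\<forall>X. cyclic_submod R M X \<longrightarrow>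
       (\<exists>D A. direct_summand R M D \<and> small R M A \<and>
              X = D <+>\<^bsub>M\<^esub> A \<and> D \<inter> A = {\<zero>\<^bsub>M\<^esub>})"
    proof (intro allI impI)
      fix X assume c: "cyclic_submod R M X"
      then obtain D where D: "direct_summand R M D" and B: "beta_star R M X D"
        using P unfolding principally_Goldie_star_lifting_def by blast
      show "\<exists>D A. direct_summand R M D \<and> small R M A \<and>
              X = D <+>\<^bsub>M\<^esub> A \<and> D \<inter> A = {\<zero>\<^bsub>M\<^esub>}"
        by (rule fwd[OF assms(2) cyclic_submod[OF c] D B])
    qed
  next
    assume H: "\<forall>X. cyclic_submod R M X \<longrightarrow>
       (\<exists>D A. direct_summand R M D \<and> small R M A \<and>
              X = D <+>\<^bsub>M\<^esub> A \<and> D \<inter> A = {\<zero>\<^bsub>M\<^esub>})"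
    show "principally_Goldie_star_lifting R M"
      unfolding principally_Goldie_star_lifting_def
    proof (intro allI impI)
      fix X assume c: "cyclic_submod R M X"
      then obtain D A where D: "direct_summand R M D" and A: "small R M A" and XDA: "X = D <+>\<^bsub>M\<^esub> A"
        using H by blast
      have Ds: "submod R M D" using D by (simp add: direct_summand_def)
      show "\<exists>D. direct_summand R M D \<and> beta_star R M X D"
        using D bwd[OF cyclic_submod[OF c] Ds A XDA] by blast
    qed
  qed
qed

end
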